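(* Let $n=2$, $D_0>0$, $\alpha>\beta>0$, and $\gamma_1,\gamma_2\in(0,1)$. Assume the matrix $H$ with $H_{ii}=\gamma_i$ and $H_{12}=H_{21}=-(\beta/\alpha)(\gamma_1+\gamma_2)/2$ is positive definite. Let $p^a_1\ge p^a_2\ge0$, and put $$D_0'=D_0(\alpha+\beta)/\alpha,\qquad \alpha'=(\alpha^2-\beta^2)/\alpha.$$ In the two-CP ex post regulation game described below: - If $$p^a_1\ \ge\ \frac{2\alpha}{\beta}\,p^a_2+\frac{(2\alpha-\beta)D_0}{\beta(\alpha-\beta)},$$ then there exists a pure-strategy Nash equilibrium with $d_1>0$ and $d_2=0$, and every pure-strategy Nash equilibrium is of this kind. Every such equilibrium satisfies: - $p^s_1+p^c_1=\frac{D_0'-\alpha'p^a_1}{2\alpha'}$, with $p^s_1$ (or $p^c_1$) otherwise free; - $d_1=\frac{D_0'+\alpha'p^a_1}{2}$; - the net revenue per unit demand $p^s_1+p^c_1+p^a_1=\frac{D_0'+\alpha'p^a_1}{2\alpha'}$ is shared in proportions $\gamma_1$ and $1-\gamma_1$ by the ISP and CP 1. - If this inequality does not hold, there is no pure-strategy Nash equilibrium.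
   Context: Two-CP model with one ISP. Prices $p^s_1,p^s_2$ are chosen by the ISP, and $p^c_i$ by CP $i$; write $p_i=p^s_i+p^c_i$. Demands $d_i(p_1,p_2)$ are defined piecewise: 1. If $p_1<(D_0+\beta p_2)/\alpha$ and $p_2<(D_0+\beta p_1)/\alpha$: $d_1=D_0-\alpha p_1+\beta p_2$ and $d_2=D_0-\alpha p_2+\beta p_1$. 2. If $p_1<D_0/(\alpha-\beta)$ and $p_2\ge(D_0+\beta p_1)/\alpha$: $d_1=D_0-\alpha p_1+\beta(D_0+\beta p_1)/\alpha$ and $d_2=0$. 3. The case symmetric to case 2, with indices $1,2$ swapped. 4. If $p_1\ge D_0/(\alpha-\beta)$ and $p_2\ge D_0/(\alpha-\beta)$: $d_1=d_2=0$. $p^a_i\ge0$ is CP $i$'s advertising revenue per unit demand. Ex post regulation: after prices are set, a regulator sets the payment $p^d_i$ from CP $i$ to the ISP so that the revenue per unit demand $p_i+p^a_i$ from CP $i$'s content is split as $\gamma_i(p_i+p^a_i)$ to the ISP and $(1-\gamma_i)(p_i+p^a_i)$ to CP $i$. The resulting payoffs are $$U_{ISP}=\gamma_1d_1(p_1+p^a_1)+\gamma_2d_2(p_2+p^a_2),\qquad U_{CP,i}=(1-\gamma_i)d_i(p_i+p^a_i).$$ The ISP chooses $(p^s_1,p^s_2)\in\mathbb{R}^2$ and each CP $i$ chooses $p^c_i\in\mathbb{R}$, all simultaneously. *)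

theory Defs
  imports Complex_Main
begin

definition demand1 :: "real \<Rightarrow> real \<Rightarrow> real \<Rightarrow> real \<Rightarrow> real \<Rightarrow> real" where
  "demand1 D0 \<alpha> \<beta> p1 p2 =
     (if p1 < (D0 + \<beta> * p2) / \<alpha> \<and> p2 < (D0 + \<beta> * p1) / \<alpha>
        then D0 - \<alpha> * p1 + \<beta> * p2
      else if p1 < D0 / (\<alpha> - \<beta>) \<and> p2 \<ge> (D0 + \<beta> * p1) / \<alpha>
        then D0 - \<alpha> * p1 + \<beta> * (D0 + \<beta> * p1) / \<alpha>
      else if p2 < D0 / (\<alpha> - \<beta>) \<and> p1 \<ge> (D0 + \<beta> * p2) / \<alpha>
        then 0
      else 0)"

definition demand2 :: "real \<Rightarrow> real \<Rightarrow> real \<Rightarrow> real \<Rightarrow> real \<Rightarrow> real" where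
  "demand2 D0 \<alpha> \<beta> p1 p2 =
     (if p1 < (D0 + \<beta> * p2) / \<alpha> \<and> p2 < (D0 + \<beta> * p1) / \<alpha>
        then D0 - \<alpha> * p2 + \<beta> * p1
      else if p1 < D0 / (\<alpha> - \<beta>) \<and> p2 \<ge> (D0 + \<beta> * p1) / \<alpha>
        then 0
      else if p2 < D0 / (\<alpha> - \<beta>) \<and> p1 \<ge> (D0 + \<beta> * p2) / \<alpha>
        then D0 - \<alpha> * p2 + \<beta> * (D0 + \<beta> * p2) / \<alpha>
      else 0)"

definition U_ISP :: "real \<Rightarrow> real \<Rightarrow> real \<Rightarrow> real \<Rightarrow> real \<Rightarrow> real \<Rightarrow> real
                     \<Rightarrow> real \<Rightarrow> real \<Rightarrow> real \<Rightarrow> real \<Rightarrow> real" where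
  "U_ISP D0 \<alpha> \<beta> \<gamma>1 \<gamma>2 pa1 pa2 ps1 ps2 pc1 pc2 =
      \<gamma>1 * demand1 D0 \<alpha> \<beta> (ps1 + pc1) (ps2 + pc2) * (ps1 + pc1 + pa1)
    + \<gamma>2 * demand2 D0 \<alpha> \<beta> (ps1 + pc1) (ps2 + pc2) * (ps2 + pc2 + pa2)"

definition U_CP1 :: "real \<Rightarrow> real \<Rightarrow> real \<Rightarrow> real \<Rightarrow> real
                     \<Rightarrow> real \<Rightarrow> real \<Rightarrow> real \<Rightarrow> real \<Rightarrow> real" where
  "U_CP1 D0 \<alpha> \<beta> \<gamma>1 pa1 ps1 ps2 pc1 pc2 =
      (1 - \<gamma>1) * demand1 D0 \<alpha> \<beta> (ps1 + pc1) (ps2 + pc2) * (ps1 + pc1 + pa1)"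

definition U_CP2 :: "real \<Rightarrow> real \<Rightarrow> real \<Rightarrow> real \<Rightarrow> real
                     \<Rightarrow> real \<Rightarrow> real \<Rightarrow> real \<Rightarrow> real \<Rightarrow> real" where
  "U_CP2 D0 \<alpha> \<beta> \<gamma>2 pa2 ps1 ps2 pc1 pc2 =
      (1 - \<gamma>2) * demand2 D0 \<alpha> \<beta> (ps1 + pc1) (ps2 + pc2) * (ps2 + pc2 + pa2)"

definition is_NE :: "real \<Rightarrow> real \<Rightarrow> real \<Rightarrow> real \<Rightarrow> real \<Rightarrow> real \<Rightarrow> real
                     \<Rightarrow> real \<Rightarrow> real \<Rightarrow> real \<Rightarrow> real \<Rightarrow> bool" where
  "is_NE D0 \<alpha> \<beta> \<gamma>1 \<gamma>2 pa1 pa2 ps1 ps2 pc1 pc2 \<longleftrightarrow>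
     (\<forall>qs1 qs2. U_ISP D0 \<alpha> \<beta> \<gamma>1 \<gamma>2 pa1 pa2 qs1 qs2 pc1 pc2
                \<le> U_ISP D0 \<alpha> \<beta> \<gamma>1 \<gamma>2 pa1 pa2 ps1 ps2 pc1 pc2) \<and>
     (\<forall>qc1. U_CP1 D0 \<alpha> \<beta> \<gamma>1 pa1 ps1 ps2 qc1 pc2 \<le> U_CP1 D0 \<alpha> \<beta> \<gamma>1 pa1 ps1 ps2 pc1 pc2) \<and>
     (\<forall>qc2. U_CP2 D0 \<alpha> \<beta> \<gamma>2 pa2 ps1 ps2 pc1 qc2 \<le> U_CP2 D0 \<alpha> \<beta> \<gamma>2 pa2 ps1 ps2 pc1 pc2)"

definition posdef2 :: "real \<Rightarrow> real \<Rightarrow> real \<Rightarrow> bool" where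
  "posdef2 h11 h12 h22 \<longleftrightarrow>
     (\<forall>x1 x2. (x1, x2) \<noteq> (0, 0) \<longrightarrow> h11 * x1^2 + 2 * h12 * x1 * x2 + h22 * x2^2 > 0)"

end

theory Submission
  imports Defs
begin


lemma lt_div: "(a::real) > 0 \<Longrightarrow> (x < (D0 + b*y)/a) = (a*x < D0 + b*y)"
  by (simp add: pos_less_divide_eq mult.commute)
lemma ge_div: "(a::real) > 0 \<Longrightarrow> (x \<ge> (D0 + b*y)/a) = (a*x \<ge> D0 + b*y)"
  by (simp add: pos_divide_le_eq mult.commute)
lemma lt_E: "(a::real) > b \<Longrightarrow> (x < D0/(a-b)) = ((a-b)*x < D0)"
  by (simp add: pos_less_divide_eq mult.commute)

lemma dR1:
  assumes "\<alpha> > \<beta>" "\<beta> > 0" "\<alpha>*p1 < D0 + \<beta>*p2" "\<alpha>*p2 < D0 + \<beta>*p1"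
  shows "demand1 D0 \<alpha> \<beta> p1 p2 = D0 - \<alpha>*p1 + \<beta>*p2 \<and> demand2 D0 \<alpha> \<beta> p1 p2 = D0 - \<alpha>*p2 + \<beta>*p1"
proof -
  have a: "\<alpha> > 0" using assms by simp
  show ?thesis using assms unfolding demand1_def demand2_def by (simp add: lt_div[OF a])
qed

lemma dR2:
  assumes "\<alpha> > \<beta>" "\<beta> > 0" "(\<alpha>-\<beta>)*p1 < D0" "\<alpha>*p2 \<ge> D0 + \<beta>*p1"
  shows "demand1 D0 \<alpha> \<beta> p1 p2 = D0 - \<alpha>*p1 + \<beta>*(D0 + \<beta>*p1)/\<alpha> \<and> demand2 D0 \<alpha> \<beta> p1 p2 = 0"
proof -
  have a: "\<alpha> > 0" using assms by simp
  show ?thesis using assms unfolding demand1_def demand2_def by (simp add: lt_div[OF a] ge_div[OF a] lt_E)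
qed

lemma dR3:
  assumes "\<alpha> > \<beta>" "\<beta> > 0" "(\<alpha>-\<beta>)*p2 < D0" "\<alpha>*p1 \<ge> D0 + \<beta>*p2"
  shows "demand1 D0 \<alpha> \<beta> p1 p2 = 0 \<and> demand2 D0 \<alpha> \<beta> p1 p2 = D0 - \<alpha>*p2 + \<beta>*(D0 + \<beta>*p2)/\<alpha>"
proof -
  have a: "\<alpha> > 0" using assms by simp
  have "\<not> ((\<alpha>-\<beta>)*p1 < D0 \<and> \<alpha>*p2 \<ge> D0 + \<beta>*p1)"
  proof
    assume h: "(\<alpha>-\<beta>)*p1 < D0 \<and> \<alpha>*p2 \<ge> D0 + \<beta>*p1"
    have "\<alpha>*(\<alpha>*p1) \<ge> \<alpha>*(D0 + \<beta>*p2)" using assms a by (simp add: mult_left_mono)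
    moreover have "\<beta>*(\<alpha>*p2) \<ge> \<beta>*(D0 + \<beta>*p1)" using h assms by (simp add: mult_left_mono)
    ultimately have "(\<alpha>+\<beta>)*((\<alpha>-\<beta>)*p1) \<ge> (\<alpha>+\<beta>)*D0" by (simp add: algebra_simps)
    hence "(\<alpha>-\<beta>)*p1 \<ge> D0" using assms by (simp add: mult_le_cancel_left)
    thus False using h by simp
  qed
  hence c2: "\<not>(p1 < D0 / (\<alpha> - \<beta>) \<and> p2 \<ge> (D0 + \<beta> * p1) / \<alpha>)"
    by (simp add: lt_div[OF a] ge_div[OF a] lt_E[OF assms(1)])
  have c1: "\<not>(p1 < (D0 + \<beta> * p2) / \<alpha> \<and> p2 < (D0 + \<beta> * p1) / \<alpha>)"
    using assms(4) by (simp add: lt_div[OF a])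
  have c3: "p2 < D0 / (\<alpha> - \<beta>) \<and> p1 \<ge> (D0 + \<beta> * p2) / \<alpha>"
    using assms(3,4) by (simp add: ge_div[OF a] lt_E[OF assms(1)])
  have "demand1 D0 \<alpha> \<beta> p1 p2 = 0" unfolding demand1_def using c1 c2 c3 by (simp only: if_not_P if_P if_False)
  moreover have "demand2 D0 \<alpha> \<beta> p1 p2 = D0 - \<alpha>*p2 + \<beta>*(D0 + \<beta>*p2)/\<alpha>"
    unfolding demand2_def using c1 c2 c3 by (simp only: if_not_P if_P if_False)
  ultimately show ?thesis by simp
qed

lemma dR4:
  assumes "\<alpha> > \<beta>" "\<beta> > 0" "\<not>(\<alpha>*p1 < D0 + \<beta>*p2 \<and> \<alpha>*p2 < D0 + \<beta>*p1)"
    "\<not>((\<alpha>-\<beta>)*p1 < D0 \<and> \<alpha>*p2 \<ge> D0 + \<beta>*p1)" "\<not>((\<alpha>-\<beta>)*p2 < D0 \<and> \<alpha>*p1 \<ge> D0 + \<beta>*p2)"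
  shows "demand1 D0 \<alpha> \<beta> p1 p2 = 0 \<and> demand2 D0 \<alpha> \<beta> p1 p2 = 0"
proof -
  have a: "\<alpha> > 0" using assms by simp
  have c1: "\<not>(p1 < (D0 + \<beta> * p2) / \<alpha> \<and> p2 < (D0 + \<beta> * p1) / \<alpha>)"
    using assms(3) by (simp add: lt_div[OF a])
  have c2: "\<not>(p1 < D0 / (\<alpha> - \<beta>) \<and> p2 \<ge> (D0 + \<beta> * p1) / \<alpha>)"
    using assms(4) by (simp add: lt_div[OF a] ge_div[OF a] lt_E[OF assms(1)])
  have c3: "\<not>(p2 < D0 / (\<alpha> - \<beta>) \<and> p1 \<ge> (D0 + \<beta> * p2) / \<alpha>)"
    using assms(5) by (simp add: lt_div[OF a] ge_div[OF a] lt_E[OF assms(1)])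
  have "demand1 D0 \<alpha> \<beta> p1 p2 = 0" unfolding demand1_def using c1 c2 c3 by (simp only: if_False if_not_P)
  moreover have "demand2 D0 \<alpha> \<beta> p1 p2 = 0" unfolding demand2_def using c1 c2 c3 by (simp only: if_not_P if_False)
  ultimately show ?thesis by simp
qed

lemma quad_stat:
  fixes k a lo hi :: real
  assumes "lo < 0" "0 < hi" "a \<ge> 0" "\<forall>h. lo < h \<and> h < hi \<longrightarrow> h*k - a*h^2 \<le> 0"
  shows "k = 0"
proof (rule ccontr)
  assume k: "k \<noteq> 0"
  have c: "2*a+1 > 0" using assms by simp
  show False
  proof (cases "k > 0")
    case True
    define h where "h = min (hi/2) (k/(2*a+1))"
    have h0: "h > 0" "h < hi" using True assms c by (auto simp: h_def)
    have "h \<le> k/(2*a+1)" by (simp add: h_def)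
    hence "h*(2*a+1) \<le> k" using c by (simp add: pos_le_divide_eq)
    moreover have "h*(2*a+1) = 2*(a*h) + h" by (simp add: algebra_simps)
    moreover have "a*h \<ge> 0" using assms h0 by simp
    ultimately have "k - a*h > 0" using h0 by linarith
    hence "h*(k - a*h) > 0" using h0 by simp
    moreover have "h*(k - a*h) = h*k - a*h^2" by (simp add: algebra_simps power2_eq_square)
    ultimately have "h*k - a*h^2 > 0" by simp
    moreover have "lo < h" using assms(1) h0 by simp
    hence "h*k - a*h^2 \<le> 0" using assms(4) h0(2) by blast
    ultimately show False by simp
  next
    case False
    hence kn: "k < 0" using k by simp
    define h where "h = max (lo/2) (k/(2*a+1))"
    have h0: "h < 0" "h > lo" using kn assms c by (auto simp: h_def divide_neg_pos)
    have "h \<ge> k/(2*a+1)" by (simp add: h_def)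
    hence "h*(2*a+1) \<ge> k" using c by (simp add: pos_divide_le_eq)
    moreover have "h*(2*a+1) = 2*(a*h) + h" by (simp add: algebra_simps)
    moreover have "a*h \<le> 0" using assms h0 by (simp add: mult_nonneg_nonpos)
    ultimately have "k - a*h < 0" using h0 by linarith
    hence "h*(k - a*h) > 0" using h0 by (simp add: mult_neg_neg)
    moreover have "h*(k - a*h) = h*k - a*h^2" by (simp add: algebra_simps power2_eq_square)
    ultimately have "h*k - a*h^2 > 0" by simp
    moreover have "h < hi" using assms(2) h0 by simp
    hence "h*k - a*h^2 \<le> 0" using assms(4) h0(2) by blast
    ultimately show False by simp
  qed
qed


definition Qf :: "real \<Rightarrow> real \<Rightarrow> real \<Rightarrow> real \<Rightarrow> real \<Rightarrow> real \<Rightarrow> real \<Rightarrow> real \<Rightarrow> real \<Rightarrow> real" where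
  "Qf D0 \<alpha> \<beta> \<gamma>1 \<gamma>2 pa1 pa2 y1 y2 = \<gamma>1*(D0 - \<alpha>*y1 + \<beta>*y2)*(y1+pa1) + \<gamma>2*(D0 - \<alpha>*y2 + \<beta>*y1)*(y2+pa2)"

lemma keyA:
  fixes D0 \<alpha> \<beta> \<gamma>1 \<gamma>2 pa1 pa2 P B y1 y2 :: real
  assumes ab: "\<alpha> > \<beta>" "\<beta> > 0" and g: "\<gamma>1 > 0" "\<gamma>2 > 0"
    and pd: "posdef2 \<gamma>1 (- (\<beta> / \<alpha>) * (\<gamma>1 + \<gamma>2) / 2) \<gamma>2"
    and hP: "2*(\<alpha>-\<beta>)*P = D0 - (\<alpha>-\<beta>)*pa1"
    and hB: "\<alpha>*B = D0 + \<beta>*P"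
    and hm: "B + pa2 \<le> 0" and hs: "P + pa1 \<ge> 0"
    and hy: "\<alpha>*y2 \<le> D0 + \<beta>*y1"
  shows "Qf D0 \<alpha> \<beta> \<gamma>1 \<gamma>2 pa1 pa2 y1 y2 \<le> Qf D0 \<alpha> \<beta> \<gamma>1 \<gamma>2 pa1 pa2 P B"
proof -
  have a: "\<alpha> > 0" using ab by simp
  define u1 where "u1 = y1 - P"
  define u2 where "u2 = y2 - B"
  define K where "K = \<alpha>*\<gamma>1*u1^2 - \<beta>*(\<gamma>1+\<gamma>2)*u1*u2 + \<alpha>*\<gamma>2*u2^2"
  have H: "\<gamma>1 * u1^2 + 2 * (- (\<beta> / \<alpha>) * (\<gamma>1 + \<gamma>2) / 2) * u1 * u2 + \<gamma>2 * u2^2 \<ge> 0"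
  proof (cases "(u1,u2) = (0,0)")
    case True thus ?thesis by simp
  next
    case False thus ?thesis using pd unfolding posdef2_def by (meson less_imp_le)
  qed
  have "\<alpha> * (\<gamma>1 * u1^2 + 2 * (- (\<beta> / \<alpha>) * (\<gamma>1 + \<gamma>2) / 2) * u1 * u2 + \<gamma>2 * u2^2) = K"
    using a unfolding K_def by (simp add: field_simps)
  hence K0: "K \<ge> 0" using H a by (metis mult_nonneg_nonneg less_imp_le)
  define g1 where "g1 = \<gamma>1*(D0 - \<alpha>*P + \<beta>*B - \<alpha>*(P+pa1)) + \<gamma>2*\<beta>*(B+pa2)"
  define g2 where "g2 = \<gamma>1*\<beta>*(P+pa1) + \<gamma>2*(D0 - \<alpha>*B + \<beta>*P - \<alpha>*(B+pa2))"
  have id1: "Qf D0 \<alpha> \<beta> \<gamma>1 \<gamma>2 pa1 pa2 y1 y2 = Qf D0 \<alpha> \<beta> \<gamma>1 \<gamma>2 pa1 pa2 P B + g1*u1 + g2*u2 - K"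
    unfolding Qf_def g1_def g2_def K_def u1_def u2_def by (simp add: algebra_simps power2_eq_square)
  have "\<alpha>*g1 + \<beta>*g2 = \<gamma>1*(\<alpha>+\<beta>)*(D0 - 2*(\<alpha>-\<beta>)*P - (\<alpha>-\<beta>)*pa1) + \<gamma>2*\<beta>*(D0 - \<alpha>*B + \<beta>*P) + \<gamma>1*\<beta>*(\<alpha>*B - D0 - \<beta>*P)"
    unfolding g1_def g2_def by (simp add: algebra_simps)
  hence rel: "\<alpha>*g1 + \<beta>*g2 = 0" using hP hB by simp
  have g2pos: "g2 \<ge> 0"
  proof -
    have "g2 = \<gamma>1*\<beta>*(P+pa1) + \<gamma>2*(- \<alpha>*(B+pa2))" unfolding g2_def using hB by simp
    moreover have "\<gamma>1*\<beta>*(P+pa1) \<ge> 0" using g ab hs by simp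
    moreover have "\<alpha>*(B+pa2) \<le> 0" using a hm by (simp add: mult_nonneg_nonpos)
    hence "\<gamma>2*(\<alpha>*(B+pa2)) \<le> 0" using g by (simp add: mult_nonneg_nonpos)
    hence "\<gamma>2*(- \<alpha>*(B+pa2)) \<ge> 0" by simp
    ultimately show ?thesis by simp
  qed
  have "\<alpha>*u2 - \<beta>*u1 = \<alpha>*y2 - D0 - \<beta>*y1" unfolding u1_def u2_def using hB by (simp add: algebra_simps)
  hence "\<alpha>*u2 - \<beta>*u1 \<le> 0" using hy by simp
  hence "g2*(\<alpha>*u2 - \<beta>*u1) \<le> 0" using g2pos by (simp add: mult_nonneg_nonpos)
  moreover have "\<alpha>*(g1*u1 + g2*u2) = g2*(\<alpha>*u2 - \<beta>*u1)"
  proof -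
    have "\<alpha>*(g1*u1 + g2*u2) = (\<alpha>*g1 + \<beta>*g2)*u1 + g2*(\<alpha>*u2 - \<beta>*u1)" by (simp add: algebra_simps)
    thus ?thesis using rel by simp
  qed
  ultimately have "\<alpha>*(g1*u1 + g2*u2) \<le> 0" by simp
  hence "g1*u1 + g2*u2 \<le> 0" using a by (simp add: mult_le_0_iff)
  thus ?thesis using id1 K0 by simp
qed


lemma Gid:
  fixes a b P p D0 pa :: real
  assumes "2*(a-b)*P = D0 - (a-b)*pa"
  shows "(D0-(a-b)*P)*(P+pa) - (D0-(a-b)*p)*(p+pa) = (a-b)*(p-P)^2"
proof -
  have "(D0-(a-b)*P)*(P+pa) - (D0-(a-b)*p)*(p+pa) - (a-b)*(p-P)^2 = (D0 - (a-b)*pa - 2*(a-b)*P)*(P - p)"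
    by (simp add: algebra_simps power2_eq_square)
  thus ?thesis using assms by simp
qed



context
  fixes D0 \<alpha> \<beta> \<gamma>1 \<gamma>2 pa1 pa2 :: real
  assumes D0: "D0 > 0" and ab: "\<alpha> > \<beta>" and b0: "\<beta> > 0"
    and g1: "0 < \<gamma>1" "\<gamma>1 < 1" and g2: "0 < \<gamma>2" "\<gamma>2 < 1"
    and pd: "posdef2 \<gamma>1 (- (\<beta> / \<alpha>) * (\<gamma>1 + \<gamma>2) / 2) \<gamma>2"
    and pa: "pa1 \<ge> pa2" "pa2 \<ge> 0"
begin

abbreviation "d1 \<equiv> demand1 D0 \<alpha> \<beta>"
abbreviation "d2 \<equiv> demand2 D0 \<alpha> \<beta>"
abbreviation "W p1 p2 \<equiv> \<gamma>1 * d1 p1 p2 * (p1 + pa1) + \<gamma>2 * d2 p1 p2 * (p2 + pa2)"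
abbreviation "NEs p1 p2 \<equiv> (\<forall>q1 q2. W q1 q2 \<le> W p1 p2) \<and>
   (\<forall>q. d1 q p2 * (q + pa1) \<le> d1 p1 p2 * (p1 + pa1)) \<and>
   (\<forall>q. d2 p1 q * (q + pa2) \<le> d2 p1 p2 * (p2 + pa2))"

lemma a0: "\<alpha> > 0" using ab b0 by simp

lemma NE_iff: "is_NE D0 \<alpha> \<beta> \<gamma>1 \<gamma>2 pa1 pa2 ps1 ps2 pc1 pc2 \<longleftrightarrow> NEs (ps1+pc1) (ps2+pc2)"
proof -
  have A: "(\<forall>qs1 qs2. U_ISP D0 \<alpha> \<beta> \<gamma>1 \<gamma>2 pa1 pa2 qs1 qs2 pc1 pc2
                \<le> U_ISP D0 \<alpha> \<beta> \<gamma>1 \<gamma>2 pa1 pa2 ps1 ps2 pc1 pc2) \<longleftrightarrow> (\<forall>q1 q2. W q1 q2 \<le> W (ps1+pc1) (ps2+pc2))"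
    unfolding U_ISP_def
  proof safe
    fix q1 q2 assume "\<forall>qs1 qs2. \<gamma>1 * d1 (qs1 + pc1) (qs2 + pc2) * (qs1 + pc1 + pa1) +
           \<gamma>2 * d2 (qs1 + pc1) (qs2 + pc2) * (qs2 + pc2 + pa2)
           \<le> \<gamma>1 * d1 (ps1 + pc1) (ps2 + pc2) * (ps1 + pc1 + pa1) +
              \<gamma>2 * d2 (ps1 + pc1) (ps2 + pc2) * (ps2 + pc2 + pa2)"
    from spec[OF spec[OF this, of "q1 - pc1"], of "q2 - pc2"]
    show "W q1 q2 \<le> W (ps1 + pc1) (ps2 + pc2)" by simp
  qed simp
  have g1': "1 - \<gamma>1 > 0" "1 - \<gamma>2 > 0" using g1 g2 by auto
  have B: "(\<forall>qc1. U_CP1 D0 \<alpha> \<beta> \<gamma>1 pa1 ps1 ps2 qc1 pc2 \<le> U_CP1 D0 \<alpha> \<beta> \<gamma>1 pa1 ps1 ps2 pc1 pc2) \<longleftrightarrow>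
       (\<forall>q. d1 q (ps2+pc2) * (q + pa1) \<le> d1 (ps1+pc1) (ps2+pc2) * (ps1+pc1 + pa1))"
    unfolding U_CP1_def
  proof safe
    fix q assume "\<forall>qc1. (1 - \<gamma>1) * d1 (ps1 + qc1) (ps2 + pc2) * (ps1 + qc1 + pa1)
          \<le> (1 - \<gamma>1) * d1 (ps1 + pc1) (ps2 + pc2) * (ps1 + pc1 + pa1)"
    from spec[OF this, of "q - ps1"]
    show "d1 q (ps2+pc2) * (q + pa1) \<le> d1 (ps1+pc1) (ps2+pc2) * (ps1+pc1 + pa1)"
      using g1' by (simp add: mult.assoc)
  next
    fix qc1 assume "\<forall>q. d1 q (ps2+pc2) * (q + pa1) \<le> d1 (ps1+pc1) (ps2+pc2) * (ps1+pc1 + pa1)"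
    from spec[OF this, of "ps1 + qc1"]
    show "(1 - \<gamma>1) * d1 (ps1 + qc1) (ps2 + pc2) * (ps1 + qc1 + pa1)
          \<le> (1 - \<gamma>1) * d1 (ps1 + pc1) (ps2 + pc2) * (ps1 + pc1 + pa1)"
      using g1' by (simp add: mult.assoc add.assoc)
  qed
  have C: "(\<forall>qc2. U_CP2 D0 \<alpha> \<beta> \<gamma>2 pa2 ps1 ps2 pc1 qc2 \<le> U_CP2 D0 \<alpha> \<beta> \<gamma>2 pa2 ps1 ps2 pc1 pc2) \<longleftrightarrow>
       (\<forall>q. d2 (ps1+pc1) q * (q + pa2) \<le> d2 (ps1+pc1) (ps2+pc2) * (ps2+pc2 + pa2))"
    unfolding U_CP2_def
  proof safe
    fix q assume "\<forall>qc2. (1 - \<gamma>2) * d2 (ps1 + pc1) (ps2 + qc2) * (ps2 + qc2 + pa2)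
          \<le> (1 - \<gamma>2) * d2 (ps1 + pc1) (ps2 + pc2) * (ps2 + pc2 + pa2)"
    from spec[OF this, of "q - ps2"]
    show "d2 (ps1+pc1) q * (q + pa2) \<le> d2 (ps1+pc1) (ps2+pc2) * (ps2+pc2 + pa2)"
      using g1' by (simp add: mult.assoc)
  next
    fix qc2 assume "\<forall>q. d2 (ps1+pc1) q * (q + pa2) \<le> d2 (ps1+pc1) (ps2+pc2) * (ps2+pc2 + pa2)"
    from spec[OF this, of "ps2 + qc2"]
    show "(1 - \<gamma>2) * d2 (ps1 + pc1) (ps2 + qc2) * (ps2 + qc2 + pa2)
          \<le> (1 - \<gamma>2) * d2 (ps1 + pc1) (ps2 + pc2) * (ps2 + pc2 + pa2)"
      using g1' by (simp add: mult.assoc add.assoc)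
  qed
  show ?thesis unfolding is_NE_def using A B C by blast
qed

lemma R2val: "D0 - \<alpha>*p + \<beta>*(D0+\<beta>*p)/\<alpha> = (\<alpha>+\<beta>)*(D0-(\<alpha>-\<beta>)*p)/\<alpha>"
  using a0 by (simp add: field_simps)

lemma W_R2: "(\<alpha>-\<beta>)*p1 < D0 \<Longrightarrow> \<alpha>*p2 \<ge> D0+\<beta>*p1 \<Longrightarrow>
   W p1 p2 = \<gamma>1*((\<alpha>+\<beta>)/\<alpha>)*((D0-(\<alpha>-\<beta>)*p1)*(p1+pa1))"
  using dR2[OF ab b0, of p1 D0 p2] R2val by simp

lemma W_R3: "(\<alpha>-\<beta>)*p2 < D0 \<Longrightarrow> \<alpha>*p1 \<ge> D0+\<beta>*p2 \<Longrightarrow>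
   W p1 p2 = \<gamma>2*((\<alpha>+\<beta>)/\<alpha>)*((D0-(\<alpha>-\<beta>)*p2)*(p2+pa2))"
  using dR3[OF ab b0, of p2 D0 p1] R2val by simp

lemma d2pos: "(\<alpha>-\<beta>)*p1 < D0 \<Longrightarrow> \<alpha>*q < D0 + \<beta>*p1 \<Longrightarrow> d2 p1 q > 0"
proof -
  assume h1: "(\<alpha>-\<beta>)*p1 < D0" and h2: "\<alpha>*q < D0 + \<beta>*p1"
  show ?thesis
  proof (cases "\<alpha>*p1 < D0 + \<beta>*q")
    case True thus ?thesis using dR1[OF ab b0 True h2] h2 by simp
  next
    case False
    have "\<alpha>*((\<alpha>-\<beta>)*q) < (\<alpha>-\<beta>)*(D0 + \<beta>*p1)" using h2 ab
      by (metis mult.left_commute mult_strict_left_mono diff_gt_0_iff_gt)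
    also have "\<dots> = (\<alpha>-\<beta>)*D0 + \<beta>*((\<alpha>-\<beta>)*p1)" by (simp add: algebra_simps)
    also have "\<dots> < (\<alpha>-\<beta>)*D0 + \<beta>*D0" using h1 b0 by simp
    finally have "\<alpha>*((\<alpha>-\<beta>)*q) < \<alpha>*D0" by (simp add: algebra_simps)
    hence q: "(\<alpha>-\<beta>)*q < D0" using a0 by simp
    have "d2 p1 q = (\<alpha>+\<beta>)*(D0-(\<alpha>-\<beta>)*q)/\<alpha>" using dR3[OF ab b0 q] False R2val by simp
    thus ?thesis using q a0 ab b0 by simp
  qed
qed

lemma d1pos: "(\<alpha>-\<beta>)*p2 < D0 \<Longrightarrow> \<alpha>*q < D0 + \<beta>*p2 \<Longrightarrow> d1 q p2 > 0"
proof -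
  assume h1: "(\<alpha>-\<beta>)*p2 < D0" and h2: "\<alpha>*q < D0 + \<beta>*p2"
  show ?thesis
  proof (cases "\<alpha>*p2 < D0 + \<beta>*q")
    case True thus ?thesis using dR1[OF ab b0 h2 True] h2 by simp
  next
    case False
    have "\<alpha>*((\<alpha>-\<beta>)*q) < (\<alpha>-\<beta>)*(D0 + \<beta>*p2)" using h2 ab
      by (metis mult.left_commute mult_strict_left_mono diff_gt_0_iff_gt)
    also have "\<dots> = (\<alpha>-\<beta>)*D0 + \<beta>*((\<alpha>-\<beta>)*p2)" by (simp add: algebra_simps)
    also have "\<dots> < (\<alpha>-\<beta>)*D0 + \<beta>*D0" using h1 b0 by simp
    finally have "\<alpha>*((\<alpha>-\<beta>)*q) < \<alpha>*D0" by (simp add: algebra_simps)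
    hence q: "(\<alpha>-\<beta>)*q < D0" using a0 by simp
    have "d1 q p2 = (\<alpha>+\<beta>)*(D0-(\<alpha>-\<beta>)*q)/\<alpha>" using dR2[OF ab b0 q] False R2val by simp
    thus ?thesis using q a0 ab b0 by simp
  qed
qed


definition Pst :: real where "Pst = D0/(2*(\<alpha>-\<beta>)) - pa1/2"
definition Bst :: real where "Bst = (D0+\<beta>*Pst)/\<alpha>"

lemma hP: "2*(\<alpha>-\<beta>)*Pst = D0 - (\<alpha>-\<beta>)*pa1"
  using ab by (simp add: Pst_def field_simps)
lemma hB: "\<alpha>*Bst = D0+\<beta>*Pst"
  using a0 by (simp add: Bst_def)
lemma pa1nn: "(\<alpha>-\<beta>)*pa1 \<ge> 0" using ab pa by simp
lemma Plt: "(\<alpha>-\<beta>)*Pst < D0"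
  using hP pa1nn D0 by linarith
lemma Ppos: "Pst + pa1 > 0"
proof -
  have "2*(\<alpha>-\<beta>)*(Pst+pa1) = D0 + (\<alpha>-\<beta>)*pa1" using hP by (simp add: algebra_simps)
  hence "(2*(\<alpha>-\<beta>))*(Pst+pa1) > 0" using pa1nn D0 by simp
  thus ?thesis using ab by (simp add: zero_less_mult_iff)
qed
lemma GP: "(D0-(\<alpha>-\<beta>)*Pst)*(Pst+pa1) > 0" using Plt Ppos by simp
lemma cpos: "\<gamma>1*((\<alpha>+\<beta>)/\<alpha>) > 0" "\<gamma>2*((\<alpha>+\<beta>)/\<alpha>) > 0" using g1 g2 a0 b0 by simp_all
lemma WPB: "W Pst Bst = \<gamma>1*((\<alpha>+\<beta>)/\<alpha>)*((D0-(\<alpha>-\<beta>)*Pst)*(Pst+pa1))"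
  using W_R2[OF Plt] hB by simp
lemma WPBpos: "W Pst Bst > 0" using WPB GP cpos(1) by (metis mult_pos_pos)

lemma cond_iff: "(pa1 \<ge> (2*\<alpha>/\<beta>)*pa2 + (2*\<alpha>-\<beta>)*D0/(\<beta>*(\<alpha>-\<beta>))) \<longleftrightarrow> Bst + pa2 \<le> 0"
proof -
  have m: "\<beta>*(\<alpha>-\<beta>) > 0" using ab b0 by simp
  have e1: "(2*\<alpha>/\<beta>)*pa2 + (2*\<alpha>-\<beta>)*D0/(\<beta>*(\<alpha>-\<beta>)) = (2*\<alpha>*(\<alpha>-\<beta>)*pa2 + (2*\<alpha>-\<beta>)*D0)/(\<beta>*(\<alpha>-\<beta>))"
    using ab b0 by (simp add: field_simps)
  have A: "(pa1 \<ge> (2*\<alpha>/\<beta>)*pa2 + (2*\<alpha>-\<beta>)*D0/(\<beta>*(\<alpha>-\<beta>))) \<longleftrightarrow> 2*\<alpha>*(\<alpha>-\<beta>)*pa2 + (2*\<alpha>-\<beta>)*D0 \<le> pa1*(\<beta>*(\<alpha>-\<beta>))"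
    unfolding e1 using pos_divide_le_eq[OF m] by simp
  have "2*(\<alpha>-\<beta>)*(\<alpha>*(Bst+pa2)) = 2*(\<alpha>-\<beta>)*(\<alpha>*Bst) + 2*\<alpha>*(\<alpha>-\<beta>)*pa2" by (simp add: algebra_simps)
  also have "\<dots> = 2*(\<alpha>-\<beta>)*D0 + \<beta>*(2*(\<alpha>-\<beta>)*Pst) + 2*\<alpha>*(\<alpha>-\<beta>)*pa2" unfolding hB by (simp add: algebra_simps)
  also have "\<dots> = (2*\<alpha>-\<beta>)*D0 + 2*\<alpha>*(\<alpha>-\<beta>)*pa2 - pa1*(\<beta>*(\<alpha>-\<beta>))" unfolding hP by (simp add: algebra_simps)
  finally have e2: "2*(\<alpha>-\<beta>)*(\<alpha>*(Bst+pa2)) = (2*\<alpha>-\<beta>)*D0 + 2*\<alpha>*(\<alpha>-\<beta>)*pa2 - pa1*(\<beta>*(\<alpha>-\<beta>))" .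
  have "(2*(\<alpha>-\<beta>)*(\<alpha>*(Bst+pa2)) \<le> 0) = (Bst+pa2 \<le> 0)" using ab a0 by (simp add: mult_le_0_iff)
  thus ?thesis using A e2 by linarith
qed

lemma NE_main:
  assumes NE: "NEs p1 p2"
  shows "(\<alpha>-\<beta>)*p1 < D0 \<and> \<alpha>*p2 \<ge> D0+\<beta>*p1 \<and> p1 = Pst \<and> Bst + pa2 \<le> 0"
proof -
  have ISP: "\<And>q1 q2. W q1 q2 \<le> W p1 p2" using NE by blast
  have C1: "\<And>q. d1 q p2 * (q + pa1) \<le> d1 p1 p2 * (p1 + pa1)" using NE by blast
  have C2: "\<And>q. d2 p1 q * (q + pa2) \<le> d2 p1 p2 * (p2 + pa2)" using NE by blast
  consider (r1) "\<alpha>*p1 < D0+\<beta>*p2 \<and> \<alpha>*p2 < D0+\<beta>*p1"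
    | (r2) "(\<alpha>-\<beta>)*p1 < D0 \<and> \<alpha>*p2 \<ge> D0+\<beta>*p1"
    | (r3) "(\<alpha>-\<beta>)*p2 < D0 \<and> \<alpha>*p1 \<ge> D0+\<beta>*p2"
    | (r4) "\<not>(\<alpha>*p1 < D0 + \<beta>*p2 \<and> \<alpha>*p2 < D0 + \<beta>*p1)"
      "\<not>((\<alpha>-\<beta>)*p1 < D0 \<and> \<alpha>*p2 \<ge> D0 + \<beta>*p1)" "\<not>((\<alpha>-\<beta>)*p2 < D0 \<and> \<alpha>*p1 \<ge> D0 + \<beta>*p2)"
    by blast
  then show ?thesis
  proof cases
    case r1
    hence h1: "\<alpha>*p1 < D0+\<beta>*p2" and h2: "\<alpha>*p2 < D0+\<beta>*p1" by auto
    define e1 where "e1 = D0-\<alpha>*p1+\<beta>*p2"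
    define e2 where "e2 = D0-\<alpha>*p2+\<beta>*p1"
    have dd: "d1 p1 p2 = e1" "d2 p1 p2 = e2" using dR1[OF ab b0 h1 h2] e1_def e2_def by auto
    define k1 where "k1 = e1 - \<alpha>*(p1+pa1)"
    define k2 where "k2 = e2 - \<alpha>*(p2+pa2)"
    define K where "K = \<gamma>1*k1 + \<gamma>2*\<beta>*(p2+pa2)"
    define lo1 where "lo1 = (\<alpha>*p2 - D0 - \<beta>*p1)/\<beta>"
    define hi1 where "hi1 = (D0+\<beta>*p2-\<alpha>*p1)/\<alpha>"
    have lo1: "lo1 < 0" using h2 b0 unfolding lo1_def by (simp add: divide_neg_pos)
    have hi1: "0 < hi1" using h1 a0 unfolding hi1_def by simp
    have rng1: "\<alpha>*(p1+h) < D0+\<beta>*p2 \<and> \<alpha>*p2 < D0+\<beta>*(p1+h)" if hh: "lo1 < h \<and> h < hi1" for h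
    proof -
      have "h*\<alpha> < D0+\<beta>*p2-\<alpha>*p1" using hh a0 unfolding hi1_def by (simp add: pos_less_divide_eq)
      moreover have "\<alpha>*p2 - D0 - \<beta>*p1 < h*\<beta>" using hh b0 unfolding lo1_def by (simp add: pos_divide_less_eq)
      ultimately show ?thesis by (simp add: algebra_simps)
    qed
    have k1: "k1 = 0"
    proof (rule quad_stat[of lo1 hi1 \<alpha>])
      show "lo1 < 0" "0 < hi1" by (fact lo1, fact hi1)
      show "0 \<le> \<alpha>" using a0 by simp
      show "\<forall>h. lo1 < h \<and> h < hi1 \<longrightarrow> h*k1 - \<alpha>*h^2 \<le> 0"
      proof (intro allI impI)
        fix h assume hh: "lo1 < h \<and> h < hi1"
        have i: "\<alpha>*(p1+h) < D0+\<beta>*p2" "\<alpha>*p2 < D0+\<beta>*(p1+h)" using rng1[OF hh] by auto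
        have "d1 (p1+h) p2 = e1 - \<alpha>*h" using dR1[OF ab b0 i] e1_def by (simp add: algebra_simps)
        with C1[of "p1+h"] dd have "(e1 - \<alpha>*h)*(p1+h+pa1) \<le> e1*(p1+pa1)" by (simp add: add.assoc)
        moreover have "(e1 - \<alpha>*h)*(p1+h+pa1) - e1*(p1+pa1) = h*k1 - \<alpha>*h^2"
          unfolding k1_def by (simp add: algebra_simps power2_eq_square)
        ultimately show "h*k1 - \<alpha>*h^2 \<le> 0" by simp
      qed
    qed
    define lo2 where "lo2 = (\<alpha>*p1 - D0 - \<beta>*p2)/\<beta>"
    define hi2 where "hi2 = (D0+\<beta>*p1-\<alpha>*p2)/\<alpha>"
    have lo2: "lo2 < 0" using h1 b0 unfolding lo2_def by (simp add: divide_neg_pos)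
    have hi2: "0 < hi2" using h2 a0 unfolding hi2_def by simp
    have k2: "k2 = 0"
    proof (rule quad_stat[of lo2 hi2 \<alpha>])
      show "lo2 < 0" "0 < hi2" by (fact lo2, fact hi2)
      show "0 \<le> \<alpha>" using a0 by simp
      show "\<forall>h. lo2 < h \<and> h < hi2 \<longrightarrow> h*k2 - \<alpha>*h^2 \<le> 0"
      proof (intro allI impI)
        fix h assume hh: "lo2 < h \<and> h < hi2"
        have "h*\<alpha> < D0+\<beta>*p1-\<alpha>*p2" using hh a0 unfolding hi2_def by (simp add: pos_less_divide_eq)
        moreover have "\<alpha>*p1 - D0 - \<beta>*p2 < h*\<beta>" using hh b0 unfolding lo2_def by (simp add: pos_divide_less_eq)
        ultimately have i: "\<alpha>*p1 < D0+\<beta>*(p2+h)" "\<alpha>*(p2+h) < D0+\<beta>*p1" by (simp_all add: algebra_simps)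
        have "d2 p1 (p2+h) = e2 - \<alpha>*h" using dR1[OF ab b0 i] e2_def by (simp add: algebra_simps)
        with C2[of "p2+h"] dd have "(e2 - \<alpha>*h)*(p2+h+pa2) \<le> e2*(p2+pa2)" by (simp add: add.assoc)
        moreover have "(e2 - \<alpha>*h)*(p2+h+pa2) - e2*(p2+pa2) = h*k2 - \<alpha>*h^2"
          unfolding k2_def by (simp add: algebra_simps power2_eq_square)
        ultimately show "h*k2 - \<alpha>*h^2 \<le> 0" by simp
      qed
    qed
    have K: "K = 0"
    proof (rule quad_stat[of lo1 hi1 "\<gamma>1*\<alpha>"])
      show "lo1 < 0" "0 < hi1" by (fact lo1, fact hi1)
      show "0 \<le> \<gamma>1*\<alpha>" using a0 g1 by simp
      show "\<forall>h. lo1 < h \<and> h < hi1 \<longrightarrow> h*K - \<gamma>1*\<alpha>*h^2 \<le> 0"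
      proof (intro allI impI)
        fix h assume hh: "lo1 < h \<and> h < hi1"
        have i: "\<alpha>*(p1+h) < D0+\<beta>*p2" "\<alpha>*p2 < D0+\<beta>*(p1+h)" using rng1[OF hh] by auto
        have "d1 (p1+h) p2 = e1 - \<alpha>*h" "d2 (p1+h) p2 = e2 + \<beta>*h"
          using dR1[OF ab b0 i] e1_def e2_def by (simp_all add: algebra_simps)
        with ISP[of "p1+h" p2] dd
        have "\<gamma>1*(e1 - \<alpha>*h)*(p1+h+pa1) + \<gamma>2*(e2 + \<beta>*h)*(p2+pa2) \<le> \<gamma>1*e1*(p1+pa1) + \<gamma>2*e2*(p2+pa2)"
          by (simp add: add.assoc)
        moreover have "\<gamma>1*(e1 - \<alpha>*h)*(p1+h+pa1) + \<gamma>2*(e2 + \<beta>*h)*(p2+pa2) - (\<gamma>1*e1*(p1+pa1) + \<gamma>2*e2*(p2+pa2))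
            = h*K - \<gamma>1*\<alpha>*h^2"
          unfolding K_def k1_def by (simp add: algebra_simps power2_eq_square)
        ultimately show "h*K - \<gamma>1*\<alpha>*h^2 \<le> 0" by simp
      qed
    qed
    have "\<gamma>2*\<beta>*(p2+pa2) = 0" using K k1 unfolding K_def by simp
    hence "p2 + pa2 = 0" using g2 b0 by simp
    hence "e2 = 0" using k2 unfolding k2_def by simp
    moreover have "e2 > 0" using h2 unfolding e2_def by simp
    ultimately show ?thesis by simp
  next
    case r2
    hence h1: "(\<alpha>-\<beta>)*p1 < D0" and h2: "\<alpha>*p2 \<ge> D0+\<beta>*p1" by auto
    have "W Pst Bst \<le> W p1 p2" by (rule ISP)
    hence "\<gamma>1*((\<alpha>+\<beta>)/\<alpha>)*((D0-(\<alpha>-\<beta>)*Pst)*(Pst+pa1)) \<le> \<gamma>1*((\<alpha>+\<beta>)/\<alpha>)*((D0-(\<alpha>-\<beta>)*p1)*(p1+pa1))"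
      unfolding WPB W_R2[OF h1 h2] .
    hence "(D0-(\<alpha>-\<beta>)*Pst)*(Pst+pa1) \<le> (D0-(\<alpha>-\<beta>)*p1)*(p1+pa1)"
      using mult_le_cancel_left_pos[OF cpos(1)] by blast
    hence "(\<alpha>-\<beta>)*(p1-Pst)^2 \<le> 0" using Gid[OF hP, of p1] by simp
    moreover have "(\<alpha>-\<beta>)*(p1-Pst)^2 \<ge> 0" using ab by simp
    ultimately have "(\<alpha>-\<beta>)*(p1-Pst)^2 = 0" by simp
    hence p1: "p1 = Pst" using ab by simp
    have "Bst + pa2 \<le> 0"
    proof (rule ccontr)
      assume nb: "\<not> Bst + pa2 \<le> 0"
      define q where "q = Bst - (Bst+pa2)/2"
      have "q < Bst" using nb unfolding q_def by simp
      hence "\<alpha>*q < \<alpha>*Bst" using a0 by simp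
      hence "\<alpha>*q < D0 + \<beta>*Pst" using hB by simp
      hence "d2 Pst q > 0" using d2pos[OF Plt] by blast
      moreover have "q + pa2 = (Bst+pa2)/2" unfolding q_def by (simp add: field_simps)
      hence "q + pa2 > 0" using nb by simp
      ultimately have "d2 Pst q * (q+pa2) > 0" by simp
      moreover have "d2 p1 p2 = 0" using dR2[OF ab b0 h1 h2] by simp
      ultimately show False using C2[of q] p1 by simp
    qed
    thus ?thesis using h1 h2 p1 by simp
  next
    case r3
    hence h1: "(\<alpha>-\<beta>)*p2 < D0" and h2: "\<alpha>*p1 \<ge> D0+\<beta>*p2" by auto
    define P2 where "P2 = D0/(2*(\<alpha>-\<beta>)) - pa2/2"
    define B2 where "B2 = (D0+\<beta>*P2)/\<alpha>"
    have hP2: "2*(\<alpha>-\<beta>)*P2 = D0 - (\<alpha>-\<beta>)*pa2" using ab by (simp add: P2_def field_simps)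
    have hB2: "\<alpha>*B2 = D0+\<beta>*P2" using a0 by (simp add: B2_def)
    have "(\<alpha>-\<beta>)*pa2 \<ge> 0" using ab pa by simp
    hence P2lt: "(\<alpha>-\<beta>)*P2 < D0" using hP2 D0 by linarith
    have "W B2 P2 \<le> W p1 p2" by (rule ISP)
    hence "\<gamma>2*((\<alpha>+\<beta>)/\<alpha>)*((D0-(\<alpha>-\<beta>)*P2)*(P2+pa2)) \<le> \<gamma>2*((\<alpha>+\<beta>)/\<alpha>)*((D0-(\<alpha>-\<beta>)*p2)*(p2+pa2))"
      unfolding W_R3[OF h1 h2] using W_R3[OF P2lt] hB2 by simp
    hence "(D0-(\<alpha>-\<beta>)*P2)*(P2+pa2) \<le> (D0-(\<alpha>-\<beta>)*p2)*(p2+pa2)"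
      using mult_le_cancel_left_pos[OF cpos(2)] by blast
    hence "(\<alpha>-\<beta>)*(p2-P2)^2 \<le> 0" using Gid[OF hP2, of p2] by simp
    moreover have "(\<alpha>-\<beta>)*(p2-P2)^2 \<ge> 0" using ab by simp
    ultimately have "(\<alpha>-\<beta>)*(p2-P2)^2 = 0" by simp
    hence p2: "p2 = P2" using ab by simp
    have "\<alpha>*pa1 \<ge> \<alpha>*pa2" using pa a0 by simp
    moreover have "\<alpha>*pa2 \<ge> \<beta>*pa2" using pa ab by (simp add: mult_right_mono)
    moreover have "\<beta>*pa2 \<ge> 0" using pa b0 by simp
    ultimately have "2*\<alpha>*pa1 - \<beta>*pa2 \<ge> 0" by linarith
    hence X: "(\<alpha>-\<beta>)*(2*\<alpha>*pa1 - \<beta>*pa2) \<ge> 0" using ab by simp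
    have "2*(\<alpha>-\<beta>)*(\<alpha>*(B2+pa1)) = 2*(\<alpha>-\<beta>)*(\<alpha>*B2) + 2*\<alpha>*(\<alpha>-\<beta>)*pa1" by (simp add: algebra_simps)
    also have "\<dots> = 2*(\<alpha>-\<beta>)*D0 + \<beta>*(2*(\<alpha>-\<beta>)*P2) + 2*\<alpha>*(\<alpha>-\<beta>)*pa1" unfolding hB2 by (simp add: algebra_simps)
    also have "\<dots> = (2*\<alpha>-\<beta>)*D0 + (\<alpha>-\<beta>)*(2*\<alpha>*pa1 - \<beta>*pa2)" unfolding hP2 by (simp add: algebra_simps)
    finally have e: "2*(\<alpha>-\<beta>)*(\<alpha>*(B2+pa1)) = (2*\<alpha>-\<beta>)*D0 + (\<alpha>-\<beta>)*(2*\<alpha>*pa1 - \<beta>*pa2)" .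
    have "(2*\<alpha>-\<beta>)*D0 > 0" using ab b0 D0 by simp
    hence "(2*(\<alpha>-\<beta>)*\<alpha>)*(B2+pa1) > 0" using e X by (simp add: mult.assoc)
    moreover have "2*(\<alpha>-\<beta>)*\<alpha> > 0" using ab a0 by simp
    ultimately have nb: "B2 + pa1 > 0" by (rule zero_less_mult_pos)
    define q where "q = B2 - (B2+pa1)/2"
    have "q < B2" using nb unfolding q_def by simp
    hence "\<alpha>*q < \<alpha>*B2" using a0 by simp
    hence "\<alpha>*q < D0 + \<beta>*P2" using hB2 by simp
    hence "d1 q P2 > 0" using d1pos[OF P2lt] by blast
    moreover have "q + pa1 = (B2+pa1)/2" unfolding q_def by (simp add: field_simps)
    hence "q + pa1 > 0" using nb by simp
    ultimately have "d1 q P2 * (q+pa1) > 0" by simp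
    moreover have "d1 p1 p2 = 0" using dR3[OF ab b0 h1 h2] by simp
    ultimately show ?thesis using C1[of q] p2 by simp
  next
    case r4
    have "W p1 p2 = 0" using dR4[OF ab b0 r4] by simp
    thus ?thesis using ISP[of Pst Bst] WPBpos by simp
  qed
qed


lemma d1PB: "d1 Pst Bst = D0 - \<alpha>*Pst + \<beta>*Bst"
proof -
  have "\<alpha>*Bst \<ge> D0 + \<beta>*Pst" using hB by simp
  thus ?thesis using dR2[OF ab b0 Plt] by (simp add: Bst_def)
qed
lemma d2PB: "d2 Pst Bst = 0" using dR2[OF ab b0 Plt] hB by simp

lemma existence:
  assumes hm: "Bst + pa2 \<le> 0"
  shows "NEs Pst Bst"
proof (intro conjI allI)
  have keyI: "\<And>y1 y2. \<alpha>*y2 \<le> D0+\<beta>*y1 \<Longrightarrow> Qf D0 \<alpha> \<beta> \<gamma>1 \<gamma>2 pa1 pa2 y1 y2 \<le> Qf D0 \<alpha> \<beta> \<gamma>1 \<gamma>2 pa1 pa2 Pst Bst"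
    using keyA[OF ab b0 g1(1) g2(1) pd hP hB hm] Ppos by simp
  have WQ: "W Pst Bst = Qf D0 \<alpha> \<beta> \<gamma>1 \<gamma>2 pa1 pa2 Pst Bst"
    unfolding Qf_def d1PB d2PB using hB by simp
  fix q1 q2
  consider (r1) "\<alpha>*q1 < D0+\<beta>*q2 \<and> \<alpha>*q2 < D0+\<beta>*q1"
    | (r2) "(\<alpha>-\<beta>)*q1 < D0 \<and> \<alpha>*q2 \<ge> D0+\<beta>*q1"
    | (r3) "(\<alpha>-\<beta>)*q2 < D0 \<and> \<alpha>*q1 \<ge> D0+\<beta>*q2"
    | (r4) "\<not>(\<alpha>*q1 < D0 + \<beta>*q2 \<and> \<alpha>*q2 < D0 + \<beta>*q1)"
      "\<not>((\<alpha>-\<beta>)*q1 < D0 \<and> \<alpha>*q2 \<ge> D0 + \<beta>*q1)" "\<not>((\<alpha>-\<beta>)*q2 < D0 \<and> \<alpha>*q1 \<ge> D0 + \<beta>*q2)"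
    by blast
  then show "W q1 q2 \<le> W Pst Bst"
  proof cases
    case r1
    hence h1: "\<alpha>*q1 < D0+\<beta>*q2" and h2: "\<alpha>*q2 < D0+\<beta>*q1" by auto
    have "W q1 q2 = Qf D0 \<alpha> \<beta> \<gamma>1 \<gamma>2 pa1 pa2 q1 q2" unfolding Qf_def using dR1[OF ab b0 h1 h2] by simp
    thus ?thesis using keyI[of q2 q1] h2 WQ by simp
  next
    case r2
    hence h1: "(\<alpha>-\<beta>)*q1 < D0" and h2: "\<alpha>*q2 \<ge> D0+\<beta>*q1" by auto
    have "(\<alpha>-\<beta>)*(q1-Pst)^2 \<ge> 0" using ab by simp
    hence "(D0-(\<alpha>-\<beta>)*q1)*(q1+pa1) \<le> (D0-(\<alpha>-\<beta>)*Pst)*(Pst+pa1)" using Gid[OF hP, of q1] by simp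
    hence "\<gamma>1*((\<alpha>+\<beta>)/\<alpha>)*((D0-(\<alpha>-\<beta>)*q1)*(q1+pa1)) \<le> \<gamma>1*((\<alpha>+\<beta>)/\<alpha>)*((D0-(\<alpha>-\<beta>)*Pst)*(Pst+pa1))"
      using mult_le_cancel_left_pos[OF cpos(1)] by blast
    thus ?thesis unfolding W_R2[OF h1 h2] WPB .
  next
    case r3
    hence h1: "(\<alpha>-\<beta>)*q2 < D0" and h2: "\<alpha>*q1 \<ge> D0+\<beta>*q2" by auto
    define y1 where "y1 = (D0+\<beta>*q2)/\<alpha>"
    have hy: "\<alpha>*y1 = D0+\<beta>*q2" using a0 unfolding y1_def by simp
    have "W q1 q2 = \<gamma>2 * (D0 - \<alpha>*q2 + \<beta>*(D0 + \<beta>*q2)/\<alpha>) * (q2+pa2)" using dR3[OF ab b0 h1 h2] by simp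
    also have "\<dots> = Qf D0 \<alpha> \<beta> \<gamma>1 \<gamma>2 pa1 pa2 y1 q2" unfolding Qf_def using hy by (simp add: y1_def)
    finally have WY: "W q1 q2 = Qf D0 \<alpha> \<beta> \<gamma>1 \<gamma>2 pa1 pa2 y1 q2" .
    have "(\<alpha>+\<beta>)*((\<alpha>-\<beta>)*q2) \<le> (\<alpha>+\<beta>)*D0" using h1 ab b0 by simp
    hence "\<alpha>*(\<alpha>*q2) \<le> \<alpha>*D0 + \<beta>*(\<alpha>*y1)" unfolding hy by (simp add: algebra_simps)
    hence "\<alpha>*(\<alpha>*q2) \<le> \<alpha>*(D0 + \<beta>*y1)" by (simp add: algebra_simps)
    hence "\<alpha>*q2 \<le> D0 + \<beta>*y1" using a0 by simp
    thus ?thesis using keyI WY WQ by simp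
  next
    case r4
    have "W q1 q2 = 0" using dR4[OF ab b0 r4] by simp
    thus ?thesis using WPBpos by simp
  qed
next
  fix q
  define s where "s = Pst + pa1"
  define dd where "dd = D0 - \<alpha>*Pst + \<beta>*Bst"
  have V: "d1 Pst Bst * (Pst + pa1) = dd * s" unfolding d1PB dd_def s_def ..
  have "\<alpha>*dd - (\<alpha>^2-\<beta>^2)*s = (\<alpha>+\<beta>)*(D0 - 2*(\<alpha>-\<beta>)*Pst - (\<alpha>-\<beta>)*pa1) + \<beta>*(\<alpha>*Bst - D0 - \<beta>*Pst)"
    unfolding dd_def s_def by (simp add: algebra_simps power2_eq_square)
  hence add: "\<alpha>*dd = (\<alpha>^2-\<beta>^2)*s" using hP hB by simp
  have spos: "s > 0" using Ppos s_def by simp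
  have "\<alpha>*(dd - \<alpha>*s) = -(\<beta>^2*s)" using add by (simp add: algebra_simps power2_eq_square)
  moreover have "\<beta>^2*s \<ge> 0" using spos by simp
  ultimately have "\<alpha>*(dd - \<alpha>*s) \<le> 0" by simp
  hence ddn: "dd - \<alpha>*s \<le> 0" using a0 by (simp add: mult_le_0_iff)
  have ddpos: "dd*s \<ge> 0"
  proof -
    have "\<beta>^2 < \<alpha>^2" using ab b0 by (simp add: power_strict_mono)
    hence "(\<alpha>^2-\<beta>^2)*s \<ge> 0" using spos by simp
    hence "\<alpha>*dd \<ge> 0" using add by simp
    hence "dd \<ge> 0" using a0 by (simp add: zero_le_mult_iff)
    thus ?thesis using spos by simp
  qed
  consider (r1) "\<alpha>*q < D0+\<beta>*Bst \<and> \<alpha>*Bst < D0+\<beta>*q"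
    | (r2) "(\<alpha>-\<beta>)*q < D0 \<and> \<alpha>*Bst \<ge> D0+\<beta>*q"
    | (r3) "(\<alpha>-\<beta>)*Bst < D0 \<and> \<alpha>*q \<ge> D0+\<beta>*Bst"
    | (r4) "\<not>(\<alpha>*q < D0 + \<beta>*Bst \<and> \<alpha>*Bst < D0 + \<beta>*q)"
      "\<not>((\<alpha>-\<beta>)*q < D0 \<and> \<alpha>*Bst \<ge> D0 + \<beta>*q)" "\<not>((\<alpha>-\<beta>)*Bst < D0 \<and> \<alpha>*q \<ge> D0 + \<beta>*Bst)"
    by blast
  then show "d1 q Bst * (q + pa1) \<le> d1 Pst Bst * (Pst + pa1)"
  proof cases
    case r1
    hence h1: "\<alpha>*q < D0+\<beta>*Bst" and h2: "\<alpha>*Bst < D0+\<beta>*q" by auto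
    define h where "h = q - Pst"
    have "\<beta>*Pst < \<beta>*q" using h2 hB by simp
    hence hpos: "h > 0" using b0 unfolding h_def by simp
    have "d1 q Bst = dd - \<alpha>*h" using dR1[OF ab b0 h1 h2] unfolding dd_def h_def by (simp add: algebra_simps)
    hence "d1 q Bst * (q + pa1) = (dd - \<alpha>*h) * (q + pa1)" by simp
    also have "\<dots> = dd*s + h*(dd - \<alpha>*s) - \<alpha>*h^2"
      unfolding s_def h_def by (simp add: algebra_simps power2_eq_square)
    finally have "d1 q Bst * (q + pa1) = dd*s + h*(dd - \<alpha>*s) - \<alpha>*h^2" .
    moreover have "h*(dd - \<alpha>*s) \<le> 0" using hpos ddn by (simp add: mult_nonneg_nonpos)
    moreover have "\<alpha>*h^2 \<ge> 0" using a0 by simp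
    ultimately show ?thesis using V by linarith
  next
    case r2
    hence h1: "(\<alpha>-\<beta>)*q < D0" and h2: "\<alpha>*Bst \<ge> D0+\<beta>*q" by auto
    have "(\<alpha>-\<beta>)*(q-Pst)^2 \<ge> 0" using ab by simp
    hence "(D0-(\<alpha>-\<beta>)*q)*(q+pa1) \<le> (D0-(\<alpha>-\<beta>)*Pst)*(Pst+pa1)" using Gid[OF hP, of q] by simp
    moreover have "((\<alpha>+\<beta>)/\<alpha>) > 0" using a0 b0 by simp
    ultimately have "((\<alpha>+\<beta>)/\<alpha>)*((D0-(\<alpha>-\<beta>)*q)*(q+pa1)) \<le> ((\<alpha>+\<beta>)/\<alpha>)*((D0-(\<alpha>-\<beta>)*Pst)*(Pst+pa1))"
      using mult_le_cancel_left_pos by blast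
    moreover have "d1 q Bst = ((\<alpha>+\<beta>)/\<alpha>)*(D0-(\<alpha>-\<beta>)*q)" using dR2[OF ab b0 h1 h2] R2val by simp
    moreover have "d1 Pst Bst = ((\<alpha>+\<beta>)/\<alpha>)*(D0-(\<alpha>-\<beta>)*Pst)" using dR2[OF ab b0 Plt] hB R2val by simp
    ultimately show ?thesis by (simp add: mult.assoc)
  next
    case r3
    hence h1: "(\<alpha>-\<beta>)*Bst < D0" and h2: "\<alpha>*q \<ge> D0+\<beta>*Bst" by auto
    have "d1 q Bst = 0" using dR3[OF ab b0 h1 h2] by simp
    thus ?thesis using V ddpos by simp
  next
    case r4
    have "d1 q Bst = 0" using dR4[OF ab b0 r4] by simp
    thus ?thesis using V ddpos by simp
  qed
next
  fix q
  show "d2 Pst q * (q + pa2) \<le> d2 Pst Bst * (Bst + pa2)"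
  proof (cases "\<alpha>*q < D0 + \<beta>*Pst")
    case True
    have "d2 Pst q > 0" using d2pos[OF Plt True] .
    moreover have "\<alpha>*q < \<alpha>*Bst" using True hB by simp
    hence "q < Bst" using a0 by simp
    hence "q + pa2 \<le> 0" using hm by simp
    ultimately have "d2 Pst q * (q + pa2) \<le> 0" by (simp add: mult_nonneg_nonpos)
    thus ?thesis using d2PB by simp
  next
    case False
    have "d2 Pst q = 0" using dR2[OF ab b0 Plt] False by simp
    thus ?thesis using d2PB by simp
  qed
qed


lemma sq_fact: "(\<alpha>^2 - \<beta>^2) = (\<alpha>+\<beta>)*(\<alpha>-\<beta>)" by (simp add: algebra_simps power2_eq_square)

lemma den_pos: "2*((\<alpha>^2 - \<beta>^2)/\<alpha>) > 0"
  unfolding sq_fact using ab b0 a0 by simp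

lemma den_eq: "2*((\<alpha>^2 - \<beta>^2)/\<alpha>)*x = ((\<alpha>+\<beta>)/\<alpha>)*(2*(\<alpha>-\<beta>)*x)"
  unfolding sq_fact using a0 by (simp add: field_simps)

lemma num_eq: "((\<alpha>+\<beta>)/\<alpha>)*(D0 + c*((\<alpha>-\<beta>)*pa1)) = D0 * (\<alpha> + \<beta>) / \<alpha> + c*(((\<alpha>^2 - \<beta>^2) / \<alpha>) * pa1)"
  unfolding sq_fact using a0 by (simp add: field_simps)

lemma solve: "(c::real) > 0 \<Longrightarrow> c*x = y \<Longrightarrow> x = y/c"
  by (simp add: eq_divide_eq mult.commute)

lemma Pst_eq: "Pst = (D0 * (\<alpha> + \<beta>) / \<alpha> - ((\<alpha>^2 - \<beta>^2) / \<alpha>) * pa1) / (2 * ((\<alpha>^2 - \<beta>^2) / \<alpha>))"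
proof -
  have "2*((\<alpha>^2 - \<beta>^2)/\<alpha>)*Pst = ((\<alpha>+\<beta>)/\<alpha>)*(D0 + (-1)*((\<alpha>-\<beta>)*pa1))" unfolding den_eq hP by simp
  also have "\<dots> = D0 * (\<alpha> + \<beta>) / \<alpha> - ((\<alpha>^2 - \<beta>^2) / \<alpha>) * pa1" unfolding num_eq by simp
  finally show ?thesis by (rule solve[OF den_pos])
qed

lemma d1_eq: "D0 - \<alpha>*Pst + \<beta>*(D0+\<beta>*Pst)/\<alpha> = (D0 * (\<alpha> + \<beta>) / \<alpha> + ((\<alpha>^2 - \<beta>^2) / \<alpha>) * pa1) / 2"
proof -
  have "2*((\<alpha>-\<beta>)*Pst) = D0 - (\<alpha>-\<beta>)*pa1" using hP by (metis mult.assoc)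
  hence e: "D0-(\<alpha>-\<beta>)*Pst = (D0 + 1*((\<alpha>-\<beta>)*pa1))/2" by simp
  have "D0 - \<alpha>*Pst + \<beta>*(D0+\<beta>*Pst)/\<alpha> = ((\<alpha>+\<beta>)/\<alpha>)*(D0 + 1*((\<alpha>-\<beta>)*pa1))/2"
    unfolding R2val e by simp
  also have "\<dots> = (D0 * (\<alpha> + \<beta>) / \<alpha> + 1*(((\<alpha>^2 - \<beta>^2) / \<alpha>) * pa1)) / 2" unfolding num_eq ..
  finally show ?thesis by simp
qed

lemma s_eq: "Pst + pa1 = (D0 * (\<alpha> + \<beta>) / \<alpha> + ((\<alpha>^2 - \<beta>^2) / \<alpha>) * pa1) / (2 * ((\<alpha>^2 - \<beta>^2) / \<alpha>))"
proof -
  have "2*(\<alpha>-\<beta>)*(Pst+pa1) = D0 + 1*((\<alpha>-\<beta>)*pa1)" using hP by (simp add: algebra_simps)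
  hence "2*((\<alpha>^2 - \<beta>^2)/\<alpha>)*(Pst+pa1) = ((\<alpha>+\<beta>)/\<alpha>)*(D0 + 1*((\<alpha>-\<beta>)*pa1))" unfolding den_eq by simp
  also have "\<dots> = D0 * (\<alpha> + \<beta>) / \<alpha> + 1*(((\<alpha>^2 - \<beta>^2) / \<alpha>) * pa1)" unfolding num_eq ..
  finally have "2*((\<alpha>^2 - \<beta>^2)/\<alpha>)*(Pst+pa1) = D0 * (\<alpha> + \<beta>) / \<alpha> + ((\<alpha>^2 - \<beta>^2) / \<alpha>) * pa1"
    by (simp only: mult_1)
  thus ?thesis by (rule solve[OF den_pos])
qed

lemma main:
  shows
    "(pa1 \<ge> (2 * \<alpha> / \<beta>) * pa2 + (2 * \<alpha> - \<beta>) * D0 / (\<beta> * (\<alpha> - \<beta>)) \<longrightarrow>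
        (\<exists>ps1 ps2 pc1 pc2. is_NE D0 \<alpha> \<beta> \<gamma>1 \<gamma>2 pa1 pa2 ps1 ps2 pc1 pc2) \<and>
        (\<forall>ps1 ps2 pc1 pc2. is_NE D0 \<alpha> \<beta> \<gamma>1 \<gamma>2 pa1 pa2 ps1 ps2 pc1 pc2 \<longrightarrow>
           demand1 D0 \<alpha> \<beta> (ps1 + pc1) (ps2 + pc2) > 0 \<and>
           demand2 D0 \<alpha> \<beta> (ps1 + pc1) (ps2 + pc2) = 0 \<and>
           ps1 + pc1 = (D0 * (\<alpha> + \<beta>) / \<alpha> - ((\<alpha>^2 - \<beta>^2) / \<alpha>) * pa1) / (2 * ((\<alpha>^2 - \<beta>^2) / \<alpha>)) \<and>
           (\<forall>t. is_NE D0 \<alpha> \<beta> \<gamma>1 \<gamma>2 pa1 pa2 t ps2 (ps1 + pc1 - t) pc2) \<and>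
           demand1 D0 \<alpha> \<beta> (ps1 + pc1) (ps2 + pc2) = (D0 * (\<alpha> + \<beta>) / \<alpha> + ((\<alpha>^2 - \<beta>^2) / \<alpha>) * pa1) / 2 \<and>
           ps1 + pc1 + pa1 = (D0 * (\<alpha> + \<beta>) / \<alpha> + ((\<alpha>^2 - \<beta>^2) / \<alpha>) * pa1) / (2 * ((\<alpha>^2 - \<beta>^2) / \<alpha>)) \<and>
           U_ISP D0 \<alpha> \<beta> \<gamma>1 \<gamma>2 pa1 pa2 ps1 ps2 pc1 pc2
             = \<gamma>1 * (demand1 D0 \<alpha> \<beta> (ps1 + pc1) (ps2 + pc2) * (ps1 + pc1 + pa1)) \<and>
           U_CP1 D0 \<alpha> \<beta> \<gamma>1 pa1 ps1 ps2 pc1 pc2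
             = (1 - \<gamma>1) * (demand1 D0 \<alpha> \<beta> (ps1 + pc1) (ps2 + pc2) * (ps1 + pc1 + pa1))))
     \<and>
     (\<not> (pa1 \<ge> (2 * \<alpha> / \<beta>) * pa2 + (2 * \<alpha> - \<beta>) * D0 / (\<beta> * (\<alpha> - \<beta>))) \<longrightarrow>
        \<not> (\<exists>ps1 ps2 pc1 pc2. is_NE D0 \<alpha> \<beta> \<gamma>1 \<gamma>2 pa1 pa2 ps1 ps2 pc1 pc2))"
proof (intro conjI impI)
  assume "pa1 \<ge> (2 * \<alpha> / \<beta>) * pa2 + (2 * \<alpha> - \<beta>) * D0 / (\<beta> * (\<alpha> - \<beta>))"
  hence hm: "Bst + pa2 \<le> 0" using cond_iff by simp
  have "is_NE D0 \<alpha> \<beta> \<gamma>1 \<gamma>2 pa1 pa2 Pst Bst 0 0" using existence[OF hm] NE_iff[of Pst Bst 0 0] by simp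
  thus "\<exists>ps1 ps2 pc1 pc2. is_NE D0 \<alpha> \<beta> \<gamma>1 \<gamma>2 pa1 pa2 ps1 ps2 pc1 pc2" by blast
next
  show "\<forall>ps1 ps2 pc1 pc2. is_NE D0 \<alpha> \<beta> \<gamma>1 \<gamma>2 pa1 pa2 ps1 ps2 pc1 pc2 \<longrightarrow>
           demand1 D0 \<alpha> \<beta> (ps1 + pc1) (ps2 + pc2) > 0 \<and>
           demand2 D0 \<alpha> \<beta> (ps1 + pc1) (ps2 + pc2) = 0 \<and>
           ps1 + pc1 = (D0 * (\<alpha> + \<beta>) / \<alpha> - ((\<alpha>^2 - \<beta>^2) / \<alpha>) * pa1) / (2 * ((\<alpha>^2 - \<beta>^2) / \<alpha>)) \<and>
           (\<forall>t. is_NE D0 \<alpha> \<beta> \<gamma>1 \<gamma>2 pa1 pa2 t ps2 (ps1 + pc1 - t) pc2) \<and>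
           demand1 D0 \<alpha> \<beta> (ps1 + pc1) (ps2 + pc2) = (D0 * (\<alpha> + \<beta>) / \<alpha> + ((\<alpha>^2 - \<beta>^2) / \<alpha>) * pa1) / 2 \<and>
           ps1 + pc1 + pa1 = (D0 * (\<alpha> + \<beta>) / \<alpha> + ((\<alpha>^2 - \<beta>^2) / \<alpha>) * pa1) / (2 * ((\<alpha>^2 - \<beta>^2) / \<alpha>)) \<and>
           U_ISP D0 \<alpha> \<beta> \<gamma>1 \<gamma>2 pa1 pa2 ps1 ps2 pc1 pc2
             = \<gamma>1 * (demand1 D0 \<alpha> \<beta> (ps1 + pc1) (ps2 + pc2) * (ps1 + pc1 + pa1)) \<and>
           U_CP1 D0 \<alpha> \<beta> \<gamma>1 pa1 ps1 ps2 pc1 pc2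
             = (1 - \<gamma>1) * (demand1 D0 \<alpha> \<beta> (ps1 + pc1) (ps2 + pc2) * (ps1 + pc1 + pa1))"
  proof (intro allI impI)
    fix ps1 ps2 pc1 pc2
    assume ne: "is_NE D0 \<alpha> \<beta> \<gamma>1 \<gamma>2 pa1 pa2 ps1 ps2 pc1 pc2"
    hence NE: "NEs (ps1+pc1) (ps2+pc2)" using NE_iff by blast
    from NE_main[OF NE] have h1: "(\<alpha>-\<beta>)*(ps1+pc1) < D0" and h2: "\<alpha>*(ps2+pc2) \<ge> D0+\<beta>*(ps1+pc1)"
      and p1: "ps1+pc1 = Pst" by auto
    have dd: "d1 (ps1+pc1) (ps2+pc2) = D0 - \<alpha>*Pst + \<beta>*(D0+\<beta>*Pst)/\<alpha>" "d2 (ps1+pc1) (ps2+pc2) = 0"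
      using dR2[OF ab b0 h1 h2] p1 by auto
    have dpos: "d1 (ps1+pc1) (ps2+pc2) > 0"
      using dd(1) R2val[of Pst] Plt a0 ab b0 by simp
    have allt: "\<forall>t. is_NE D0 \<alpha> \<beta> \<gamma>1 \<gamma>2 pa1 pa2 t ps2 (ps1 + pc1 - t) pc2"
    proof
      fix t show "is_NE D0 \<alpha> \<beta> \<gamma>1 \<gamma>2 pa1 pa2 t ps2 (ps1 + pc1 - t) pc2"
        using NE_iff[of t ps2 "ps1 + pc1 - t" pc2] NE by simp
    qed
    have u1: "U_ISP D0 \<alpha> \<beta> \<gamma>1 \<gamma>2 pa1 pa2 ps1 ps2 pc1 pc2
             = \<gamma>1 * (demand1 D0 \<alpha> \<beta> (ps1 + pc1) (ps2 + pc2) * (ps1 + pc1 + pa1))"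
      unfolding U_ISP_def using dd(2) by (simp add: mult.assoc)
    have u2: "U_CP1 D0 \<alpha> \<beta> \<gamma>1 pa1 ps1 ps2 pc1 pc2
             = (1 - \<gamma>1) * (demand1 D0 \<alpha> \<beta> (ps1 + pc1) (ps2 + pc2) * (ps1 + pc1 + pa1))"
      unfolding U_CP1_def by (simp add: mult.assoc)
    show "demand1 D0 \<alpha> \<beta> (ps1 + pc1) (ps2 + pc2) > 0 \<and>
           demand2 D0 \<alpha> \<beta> (ps1 + pc1) (ps2 + pc2) = 0 \<and>
           ps1 + pc1 = (D0 * (\<alpha> + \<beta>) / \<alpha> - ((\<alpha>^2 - \<beta>^2) / \<alpha>) * pa1) / (2 * ((\<alpha>^2 - \<beta>^2) / \<alpha>)) \<and>
           (\<forall>t. is_NE D0 \<alpha> \<beta> \<gamma>1 \<gamma>2 pa1 pa2 t ps2 (ps1 + pc1 - t) pc2) \<and>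
           demand1 D0 \<alpha> \<beta> (ps1 + pc1) (ps2 + pc2) = (D0 * (\<alpha> + \<beta>) / \<alpha> + ((\<alpha>^2 - \<beta>^2) / \<alpha>) * pa1) / 2 \<and>
           ps1 + pc1 + pa1 = (D0 * (\<alpha> + \<beta>) / \<alpha> + ((\<alpha>^2 - \<beta>^2) / \<alpha>) * pa1) / (2 * ((\<alpha>^2 - \<beta>^2) / \<alpha>)) \<and>
           U_ISP D0 \<alpha> \<beta> \<gamma>1 \<gamma>2 pa1 pa2 ps1 ps2 pc1 pc2
             = \<gamma>1 * (demand1 D0 \<alpha> \<beta> (ps1 + pc1) (ps2 + pc2) * (ps1 + pc1 + pa1)) \<and>
           U_CP1 D0 \<alpha> \<beta> \<gamma>1 pa1 ps1 ps2 pc1 pc2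
             = (1 - \<gamma>1) * (demand1 D0 \<alpha> \<beta> (ps1 + pc1) (ps2 + pc2) * (ps1 + pc1 + pa1))"
      using dpos dd allt u1 u2 p1 Pst_eq d1_eq s_eq by simp
  qed
next
  assume nc: "\<not> (pa1 \<ge> (2 * \<alpha> / \<beta>) * pa2 + (2 * \<alpha> - \<beta>) * D0 / (\<beta> * (\<alpha> - \<beta>)))"
  show "\<not> (\<exists>ps1 ps2 pc1 pc2. is_NE D0 \<alpha> \<beta> \<gamma>1 \<gamma>2 pa1 pa2 ps1 ps2 pc1 pc2)"
  proof
    assume "\<exists>ps1 ps2 pc1 pc2. is_NE D0 \<alpha> \<beta> \<gamma>1 \<gamma>2 pa1 pa2 ps1 ps2 pc1 pc2"
    then obtain ps1 ps2 pc1 pc2 where "is_NE D0 \<alpha> \<beta> \<gamma>1 \<gamma>2 pa1 pa2 ps1 ps2 pc1 pc2" by blast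
    hence "NEs (ps1+pc1) (ps2+pc2)" using NE_iff by blast
    hence "Bst + pa2 \<le> 0" using NE_main by blast
    thus False using nc cond_iff by simp
  qed
qed

end

theorem theorem4:
  fixes D0 \<alpha> \<beta> \<gamma>1 \<gamma>2 pa1 pa2 :: real
  assumes "D0 > 0" and "\<alpha> > \<beta>" and "\<beta> > 0"
    and "0 < \<gamma>1" and "\<gamma>1 < 1" and "0 < \<gamma>2" and "\<gamma>2 < 1"
    and "posdef2 \<gamma>1 (- (\<beta> / \<alpha>) * (\<gamma>1 + \<gamma>2) / 2) \<gamma>2"
    and "pa1 \<ge> pa2" and "pa2 \<ge> 0"
  defines "D0' \<equiv> D0 * (\<alpha> + \<beta>) / \<alpha>"
    and "\<alpha>' \<equiv> (\<alpha>^2 - \<beta>^2) / \<alpha>"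
  shows
    "(pa1 \<ge> (2 * \<alpha> / \<beta>) * pa2 + (2 * \<alpha> - \<beta>) * D0 / (\<beta> * (\<alpha> - \<beta>)) \<longrightarrow>
        (\<exists>ps1 ps2 pc1 pc2. is_NE D0 \<alpha> \<beta> \<gamma>1 \<gamma>2 pa1 pa2 ps1 ps2 pc1 pc2) \<and>
        (\<forall>ps1 ps2 pc1 pc2. is_NE D0 \<alpha> \<beta> \<gamma>1 \<gamma>2 pa1 pa2 ps1 ps2 pc1 pc2 \<longrightarrow>
           demand1 D0 \<alpha> \<beta> (ps1 + pc1) (ps2 + pc2) > 0 \<and>
           demand2 D0 \<alpha> \<beta> (ps1 + pc1) (ps2 + pc2) = 0 \<and>
           ps1 + pc1 = (D0' - \<alpha>' * pa1) / (2 * \<alpha>') \<and>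
           (\<forall>t. is_NE D0 \<alpha> \<beta> \<gamma>1 \<gamma>2 pa1 pa2 t ps2 (ps1 + pc1 - t) pc2) \<and>
           demand1 D0 \<alpha> \<beta> (ps1 + pc1) (ps2 + pc2) = (D0' + \<alpha>' * pa1) / 2 \<and>
           ps1 + pc1 + pa1 = (D0' + \<alpha>' * pa1) / (2 * \<alpha>') \<and>
           U_ISP D0 \<alpha> \<beta> \<gamma>1 \<gamma>2 pa1 pa2 ps1 ps2 pc1 pc2
             = \<gamma>1 * (demand1 D0 \<alpha> \<beta> (ps1 + pc1) (ps2 + pc2) * (ps1 + pc1 + pa1)) \<and>
           U_CP1 D0 \<alpha> \<beta> \<gamma>1 pa1 ps1 ps2 pc1 pc2
             = (1 - \<gamma>1) * (demand1 D0 \<alpha> \<beta> (ps1 + pc1) (ps2 + pc2) * (ps1 + pc1 + pa1))))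
     \<and>
     (\<not> (pa1 \<ge> (2 * \<alpha> / \<beta>) * pa2 + (2 * \<alpha> - \<beta>) * D0 / (\<beta> * (\<alpha> - \<beta>))) \<longrightarrow>
        \<not> (\<exists>ps1 ps2 pc1 pc2. is_NE D0 \<alpha> \<beta> \<gamma>1 \<gamma>2 pa1 pa2 ps1 ps2 pc1 pc2))"
  unfolding D0'_def \<alpha>'_def by (rule main[OF assms(1-10)])


end
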